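(* There is no commutative unitary ring $R$ with exactly three ideals such that $(Id(R),\cap,+,\otimes,\rightarrow,\{0\},R)$ is a BL-algebra which is not an MV-algebra.
   Context: For a commutative unitary ring $R$, $Id(R)$ is the set of its ideals, ordered by inclusion, with $I\cap J$, $I+J=\{i+j: i\in I, j\in J\}$, $I\otimes J=\{\sum_{k=1}^n i_kj_k: i_k\in I, j_k\in J\}$, and $I\rightarrow J=(J:I)=\{x\in R: xI\subseteq J\}$; this is a residuated lattice with bottom $\{0\}$ and top $R$. A (commutative) residuated lattice $(L,\wedge,\vee,\odot,\rightarrow,0,1)$ is a bounded lattice with a commutative ordered monoid $(L,\odot,1)$ such that $z\le x\rightarrow y$ iff $x\odot z\le y$. A BL-algebra is a residuated lattice satisfying $(x\rightarrow y)\vee(y\rightarrow x)=1$ and $x\odot(x\rightarrow y)=x\wedge y$. A BL-algebra is an MV-algebra (i.e. corresponds to an MV-algebra) when $x^{\ast\ast}=x$ for all $x$, where $x^\ast=x\rightarrow 0$. *)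

theory Defs
  imports "HOL-Algebra.Ideal_Product"
begin

definition residuated_lattice ::
  "'b set \<Rightarrow> ('b \<Rightarrow> 'b \<Rightarrow> bool) \<Rightarrow> ('b \<Rightarrow> 'b \<Rightarrow> 'b) \<Rightarrow> ('b \<Rightarrow> 'b \<Rightarrow> 'b) \<Rightarrow>
   ('b \<Rightarrow> 'b \<Rightarrow> 'b) \<Rightarrow> ('b \<Rightarrow> 'b \<Rightarrow> 'b) \<Rightarrow> 'b \<Rightarrow> 'b \<Rightarrow> bool" where
  "residuated_lattice L leq mt jn mul res bt tp \<longleftrightarrow>
     bt \<in> L \<and> tp \<in> L \<and>
     (\<forall>x\<in>L. \<forall>y\<in>L. mt x y \<in> L \<and> jn x y \<in> L \<and> mul x y \<in> L \<and> res x y \<in> L) \<and>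
     \<comment> \<open>partial order\<close>
     (\<forall>x\<in>L. leq x x) \<and>
     (\<forall>x\<in>L. \<forall>y\<in>L. leq x y \<and> leq y x \<longrightarrow> x = y) \<and>
     (\<forall>x\<in>L. \<forall>y\<in>L. \<forall>z\<in>L. leq x y \<and> leq y z \<longrightarrow> leq x z) \<and>
     \<comment> \<open>mt is the greatest lower bound, jn the least upper bound\<close>
     (\<forall>x\<in>L. \<forall>y\<in>L. leq (mt x y) x \<and> leq (mt x y) y \<and>
        (\<forall>z\<in>L. leq z x \<and> leq z y \<longrightarrow> leq z (mt x y))) \<and>
     (\<forall>x\<in>L. \<forall>y\<in>L. leq x (jn x y) \<and> leq y (jn x y) \<and>
        (\<forall>z\<in>L. leq x z \<and> leq y z \<longrightarrow> leq (jn x y) z)) \<and>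
     \<comment> \<open>bounds\<close>
     (\<forall>x\<in>L. leq bt x \<and> leq x tp) \<and>
     \<comment> \<open>commutative ordered monoid with unit tp\<close>
     (\<forall>x\<in>L. \<forall>y\<in>L. \<forall>z\<in>L. mul (mul x y) z = mul x (mul y z)) \<and>
     (\<forall>x\<in>L. \<forall>y\<in>L. mul x y = mul y x) \<and>
     (\<forall>x\<in>L. mul x tp = x) \<and>
     (\<forall>x\<in>L. \<forall>y\<in>L. \<forall>z\<in>L. leq x y \<longrightarrow> leq (mul x z) (mul y z)) \<and>
     \<comment> \<open>residuation\<close>
     (\<forall>x\<in>L. \<forall>y\<in>L. \<forall>z\<in>L. leq z (res x y) \<longleftrightarrow> leq (mul x z) y)"

definition BL_algebra ::
  "'b set \<Rightarrow> ('b \<Rightarrow> 'b \<Rightarrow> bool) \<Rightarrow> ('b \<Rightarrow> 'b \<Rightarrow> 'b) \<Rightarrow> ('b \<Rightarrow> 'b \<Rightarrow> 'b) \<Rightarrow>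
   ('b \<Rightarrow> 'b \<Rightarrow> 'b) \<Rightarrow> ('b \<Rightarrow> 'b \<Rightarrow> 'b) \<Rightarrow> 'b \<Rightarrow> 'b \<Rightarrow> bool" where
  "BL_algebra L leq mt jn mul res bt tp \<longleftrightarrow>
     residuated_lattice L leq mt jn mul res bt tp \<and>
     (\<forall>x\<in>L. \<forall>y\<in>L. jn (res x y) (res y x) = tp) \<and>
     (\<forall>x\<in>L. \<forall>y\<in>L. mul x (res x y) = mt x y)"

definition MV_algebra ::
  "'b set \<Rightarrow> ('b \<Rightarrow> 'b \<Rightarrow> bool) \<Rightarrow> ('b \<Rightarrow> 'b \<Rightarrow> 'b) \<Rightarrow> ('b \<Rightarrow> 'b \<Rightarrow> 'b) \<Rightarrow>
   ('b \<Rightarrow> 'b \<Rightarrow> 'b) \<Rightarrow> ('b \<Rightarrow> 'b \<Rightarrow> 'b) \<Rightarrow> 'b \<Rightarrow> 'b \<Rightarrow> bool" where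
  "MV_algebra L leq mt jn mul res bt tp \<longleftrightarrow>
     BL_algebra L leq mt jn mul res bt tp \<and>
     (\<forall>x\<in>L. res (res x bt) bt = x)"

definition ideals :: "('a, 'c) ring_scheme \<Rightarrow> 'a set set" where
  "ideals R = {I. ideal I R}"

definition ideal_res :: "('a, 'c) ring_scheme \<Rightarrow> 'a set \<Rightarrow> 'a set \<Rightarrow> 'a set" where
  "ideal_res R I J = {x \<in> carrier R. \<forall>i\<in>I. x \<otimes>\<^bsub>R\<^esub> i \<in> J}"

end

theory Submission
  imports Defs
begin

lemma (in cring) three_ideals_sq:
  assumes I: "ideal I R" and n0: "I \<noteq> {\<zero>}" and nc: "I \<noteq> carrier R"
    and all: "\<And>J. ideal J R \<Longrightarrow> J = {\<zero>} \<or> J = I \<or> J = carrier R"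
  shows "\<forall>a\<in>I. \<forall>b\<in>I. a \<otimes> b = \<zero>"
proof -
  have Ic: "I \<subseteq> carrier R" using I by (simp add: ideal.axioms(1) additive_subgroup.a_subset)
  have P: "PIdl x = I" if "x \<in> I" "x \<noteq> \<zero>" for x
  proof -
    have xc: "x \<in> carrier R" using that Ic by auto
    have id: "ideal (PIdl x) R" using xc by (rule cgenideal_ideal)
    have sub: "PIdl x \<subseteq> I" using cgenideal_minimal[OF I that(1)] .
    have "x \<in> PIdl x" using xc by (rule cgenideal_self)
    then have "PIdl x \<noteq> {\<zero>}" using that by auto
    moreover have "PIdl x \<noteq> carrier R" using sub nc Ic by auto
    ultimately show ?thesis using all[OF id] by auto
  qed
  have sq: "a \<otimes> a = \<zero>" if aI: "a \<in> I" for a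
  proof (rule ccontr)
    assume ne: "a \<otimes> a \<noteq> \<zero>"
    have ac: "a \<in> carrier R" using aI Ic by auto
    have aaI: "a \<otimes> a \<in> I" using I aI ac by (simp add: ideal.I_r_closed)
    have "a \<in> PIdl (a \<otimes> a)" using P[OF aaI ne] aI by simp
    then obtain r where rc: "r \<in> carrier R" and ar: "a = r \<otimes> (a \<otimes> a)"
      unfolding cgenideal_def by auto
    define e where "e = r \<otimes> a"
    have ec: "e \<in> carrier R" using rc ac e_def by simp
    have eI: "e \<in> I" using I aI rc e_def by (simp add: ideal.I_l_closed)
    have ee: "e \<otimes> e = e"
    proof -
      have "e \<otimes> e = r \<otimes> (r \<otimes> (a \<otimes> a))" using rc ac e_def by (simp add: m_ac)
      also have "\<dots> = r \<otimes> a" using ar by simp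
      finally show ?thesis using e_def by simp
    qed
    have ea: "e \<otimes> a = a" using rc ac e_def ar by (simp add: m_ac)
    have a0: "a \<noteq> \<zero>" using ne ac by auto
    have e0: "e \<noteq> \<zero>" using ea a0 ac by auto
    define f where "f = \<one> \<ominus> e"
    have fc: "f \<in> carrier R" using ec f_def by simp
    have fe: "f \<otimes> e = \<zero>" using ec ee f_def by (simp add: a_minus_def l_distr l_minus r_neg)
    have idf: "ideal (PIdl f) R" using fc by (rule cgenideal_ideal)
    have "PIdl f \<noteq> {\<zero>}"
    proof
      assume "PIdl f = {\<zero>}"
      then have "f = \<zero>" using cgenideal_self[OF fc] by auto
      moreover have "\<one> = (\<one> \<ominus> e) \<oplus> e" using ec by (simp add: a_minus_def a_assoc l_neg)
      ultimately have "e = \<one>" using ec f_def by simp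
      then have "\<one> \<in> I" using eI by simp
      then show False using nc I by (simp add: ideal.one_imp_carrier)
    qed
    then have "e \<in> PIdl f" using all[OF idf] eI ec by auto
    then obtain s where sc: "s \<in> carrier R" and es: "e = s \<otimes> f"
      unfolding cgenideal_def by auto
    have "e = s \<otimes> (f \<otimes> e)" using ee es sc fc ec by (metis m_assoc)
    then have "e = \<zero>" using fe sc by simp
    then show False using e0 by simp
  qed
  show ?thesis
  proof (intro ballI)
    fix a b assume aI: "a \<in> I" and bI: "b \<in> I"
    show "a \<otimes> b = \<zero>"
    proof (cases "a = \<zero>")
      case True then show ?thesis using bI Ic by auto
    next
      case False
      then have "b \<in> PIdl a" using P[OF aI] bI by simp
      then obtain r where rc: "r \<in> carrier R" and br: "b = r \<otimes> a"
        unfolding cgenideal_def by auto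
      have "a \<otimes> b = r \<otimes> (a \<otimes> a)" using br rc aI Ic by (auto simp: m_ac)
      then show ?thesis using sq[OF aI] rc by simp
    qed
  qed
qed

theorem proposition3p1:
  fixes R :: "('a, 'c) ring_scheme"
  assumes "cring R"
    and "card (ideals R) = 3"
    and "BL_algebra (ideals R) (\<subseteq>) (\<inter>) (set_add R) (ideal_prod R) (ideal_res R)
           {\<zero>\<^bsub>R\<^esub>} (carrier R)"
  shows "MV_algebra (ideals R) (\<subseteq>) (\<inter>) (set_add R) (ideal_prod R) (ideal_res R)
           {\<zero>\<^bsub>R\<^esub>} (carrier R)"
proof -
  interpret cring R by fact
  define Z where "Z = {\<zero>\<^bsub>R\<^esub>}"
  define C where "C = carrier R"
  have cl: "\<And>x y. x \<in> ideals R \<Longrightarrow> y \<in> ideals R \<Longrightarrow> ideal_res R x y \<in> ideals R"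
  proof -
    have rl: "residuated_lattice (ideals R) (\<subseteq>) (\<inter>) (set_add R) (ideal_prod R) (ideal_res R)
           {\<zero>\<^bsub>R\<^esub>} (carrier R)" using assms(3) unfolding BL_algebra_def by (rule conjunct1)
    have "\<forall>x\<in>ideals R. \<forall>y\<in>ideals R. x \<inter> y \<in> ideals R \<and> set_add R x y \<in> ideals R \<and>
       ideal_prod R x y \<in> ideals R \<and> ideal_res R x y \<in> ideals R"
      using conjunct1[OF conjunct2[OF conjunct2[OF rl[unfolded residuated_lattice_def]]]] .
    then show "\<And>x y. x \<in> ideals R \<Longrightarrow> y \<in> ideals R \<Longrightarrow> ideal_res R x y \<in> ideals R" by blast
  qed
  have Zi: "Z \<in> ideals R" unfolding Z_def ideals_def using zeroideal by simp
  have Ci: "C \<in> ideals R" unfolding C_def ideals_def using oneideal by simp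
  have sub: "J \<subseteq> C" if "J \<in> ideals R" for J
    using that unfolding ideals_def C_def by (auto dest: ideal.axioms(1) additive_subgroup.a_subset)  
  have zin: "\<zero>\<^bsub>R\<^esub> \<in> J" if "J \<in> ideals R" for J
    using that unfolding ideals_def by (auto intro: additive_subgroup.zero_closed ideal.axioms(1))
  have ZC: "Z \<noteq> C"
  proof
    assume "Z = C"
    then have "ideals R \<subseteq> {Z}" using sub zin Z_def by auto
    then have "card (ideals R) \<le> 1" using card_mono[of "{Z}" "ideals R"] by simp
    then show False using assms(2) by simp
  qed
  have fin: "finite (ideals R)" using assms(2) card.infinite by fastforce
  obtain I where Ii: "I \<in> ideals R" and IZ: "I \<noteq> Z" and IC: "I \<noteq> C"
  proof -
    have "\<not> ideals R \<subseteq> {Z, C}"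
    proof
      assume "ideals R \<subseteq> {Z, C}"
      then have "card (ideals R) \<le> card {Z, C}" by (rule card_mono[rotated]) simp
      also have "\<dots> \<le> 2" by (simp add: card_insert_le_m1)
      finally show False using assms(2) by simp
    qed
    then show ?thesis using that by auto
  qed
  have eq: "ideals R = {Z, I, C}"
  proof -
    have "{Z, I, C} \<subseteq> ideals R" using Zi Ii Ci by auto
    moreover have "card {Z, I, C} = 3" using ZC IZ IC by auto
    ultimately show ?thesis using card_subset_eq[OF fin] assms(2) by metis
  qed
  have all: "\<And>J. ideal J R \<Longrightarrow> J = {\<zero>\<^bsub>R\<^esub>} \<or> J = I \<or> J = carrier R"
    using eq unfolding ideals_def Z_def C_def by auto
  have Iid: "ideal I R" using Ii unfolding ideals_def by simp
  have prod0: "\<forall>a\<in>I. \<forall>b\<in>I. a \<otimes>\<^bsub>R\<^esub> b = \<zero>\<^bsub>R\<^esub>"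
    using three_ideals_sq[OF Iid] IZ IC all Z_def C_def by auto
  have rZZ: "ideal_res R Z Z = C" unfolding ideal_res_def Z_def C_def by auto
  have rCZ: "ideal_res R C Z = Z"
  proof
    show "ideal_res R C Z \<subseteq> Z" unfolding ideal_res_def Z_def C_def
      by (auto dest: bspec[where x="\<one>\<^bsub>R\<^esub>"])
    show "Z \<subseteq> ideal_res R C Z" unfolding ideal_res_def Z_def C_def by auto
  qed
  have rIZ: "ideal_res R I Z = I"
  proof -
    have Ic: "I \<subseteq> carrier R" using sub Ii C_def by auto
    have A: "ideal_res R I Z \<in> ideals R" using cl Ii Zi by simp
    have B: "I \<subseteq> ideal_res R I Z" unfolding ideal_res_def Z_def using prod0 Ic by auto
    have "ideal_res R I Z \<noteq> Z" using B IZ zin[OF Ii] Z_def by auto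
    moreover have "ideal_res R I Z \<noteq> C"
    proof
      assume "ideal_res R I Z = C"
      then have "\<one>\<^bsub>R\<^esub> \<in> ideal_res R I Z" using C_def by simp
      then have h: "\<forall>i\<in>I. \<one>\<^bsub>R\<^esub> \<otimes>\<^bsub>R\<^esub> i = \<zero>\<^bsub>R\<^esub>" unfolding ideal_res_def Z_def by simp
      have "I \<subseteq> Z" unfolding Z_def
      proof
        fix i assume iI: "i \<in> I"
        then have "i \<in> carrier R" using Ic by auto
        then have "i = \<one>\<^bsub>R\<^esub> \<otimes>\<^bsub>R\<^esub> i" by simp
        also have "\<dots> = \<zero>\<^bsub>R\<^esub>" using h iI by blast
        finally show "i \<in> {\<zero>\<^bsub>R\<^esub>}" by simp
      qed
      then show False using IZ zin[OF Ii] Z_def by auto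
    qed
    ultimately show ?thesis using A eq by auto
  qed
  show ?thesis unfolding MV_algebra_def
  proof (intro conjI ballI)
    show "BL_algebra (ideals R) (\<subseteq>) (\<inter>) (set_add R) (ideal_prod R) (ideal_res R)
           {\<zero>\<^bsub>R\<^esub>} (carrier R)" by fact
    fix x assume "x \<in> ideals R"
    then have "x = Z \<or> x = I \<or> x = C" using eq by simp
    then show "ideal_res R (ideal_res R x {\<zero>\<^bsub>R\<^esub>}) {\<zero>\<^bsub>R\<^esub>} = x"
      using rZZ rCZ rIZ unfolding Z_def[symmetric] by auto
  qed
qed

end
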